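(* Let $f\in\mathcal{H}^+$ satisfy the short trip property with respect to an open, simply connected neighbourhood $V$ of $0$, and assume $f$ is not locally topologically conjugate to $z\mapsto\frac12 z$ nor to $z\mapsto 2z$. Then every connected component of $W^s(V)\cap W^u(V)\setminus\{0\}$ is open and simply connected; in particular each such component is homeomorphic to the plane.
   Context: $\mathcal{H}^+$ is the set of orientation preserving homeomorphisms of the plane $\mathbb{R}^2\cong\mathbb{C}$ fixing $0$. $f$ has the short trip property with respect to a neighbourhood $V$ of $0$ if for every neighbourhood $W$ of $0$ there is an integer $N_W>0$ such that every segment of orbit $(x,f(x),\dots,f^n(x))$ contained in $V$ with $x\notin W$ and $f^n(x)\notin W$ satisfies $n<N_W$. $W^s(V)=\bigcap_{n\ge0}f^{-n}(V)$, $W^u(V)=\bigcap_{n\le0}f^{-n}(V)$. Local topological conjugacy of $f_1,f_2\in\mathcal{H}^+$ means $f_2=\varphi f_1\varphi^{-1}$ on a neighbourhood of $0$ for some $\varphi\in\mathcal{H}^+$. *)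

theory Defs
  imports "HOL-Complex_Analysis.Complex_Analysis"
begin

definition orientation_preserving :: "(complex \<Rightarrow> complex) \<Rightarrow> bool" where
  "orientation_preserving f \<longleftrightarrow>
     (\<forall>z r. r > 0 \<longrightarrow> winding_number (f \<circ> circlepath z r) (f z) = 1)"

definition H_plus :: "(complex \<Rightarrow> complex) set" where
  "H_plus = {f. (\<exists>g. homeomorphism UNIV UNIV f g) \<and> f 0 = 0 \<and> orientation_preserving f}"

definition short_trip :: "(complex \<Rightarrow> complex) \<Rightarrow> complex set \<Rightarrow> bool" where
  "short_trip f V \<longleftrightarrow>
     (\<forall>W. open W \<and> 0 \<in> W \<longrightarrow>
        (\<exists>N::nat. N > 0 \<and>
           (\<forall>x n. (\<forall>k\<le>n. (f ^^ k) x \<in> V) \<and> x \<notin> W \<and> (f ^^ n) x \<notin> W \<longrightarrow> n < N)))"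

definition Ws :: "(complex \<Rightarrow> complex) \<Rightarrow> complex set \<Rightarrow> complex set" where
  "Ws f V = (\<Inter>n. (f ^^ n) -` V)"

definition Wu :: "(complex \<Rightarrow> complex) \<Rightarrow> complex set \<Rightarrow> complex set" where
  "Wu f V = (\<Inter>n. (inv f ^^ n) -` V)"

definition loc_top_conj :: "(complex \<Rightarrow> complex) \<Rightarrow> (complex \<Rightarrow> complex) \<Rightarrow> bool" where
  "loc_top_conj f1 f2 \<longleftrightarrow>
     (\<exists>\<phi>\<in>H_plus. \<exists>U. open U \<and> 0 \<in> U \<and> (\<forall>z\<in>U. f2 z = \<phi> (f1 (inv \<phi> z))))"

end

theory Submission imports Defs begin

lemma hom_inv_eq:
  assumes "homeomorphism UNIV UNIV f g" shows "inv f = g"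
proof
  fix y
  have "f (g y) = y" "\<And>x. g (f x) = x" using assms by (auto simp: homeomorphism_def)
  then show "inv f y = g y" by (metis inv_f_eq injI)
qed

lemma hom_pow:
  fixes f g :: "complex \<Rightarrow> complex"
  assumes "homeomorphism UNIV UNIV f g"
  shows "homeomorphism UNIV UNIV (f^^n) (g^^n)"
proof (induction n)
  case 0
  have "homeomorphism UNIV UNIV (id::complex\<Rightarrow>complex) id" by (simp add: homeomorphism_def)
  then show ?case by (metis funpow.simps(1))
next
  case (Suc n)
  have "homeomorphism UNIV UNIV ((f^^n) \<circ> f) (g \<circ> (g^^n))"
    by (rule homeomorphism_compose[OF assms Suc])
  moreover have "(f^^n) \<circ> f = f \<circ> (f^^n)" by (metis funpow_Suc_right funpow.simps(2))
  ultimately show ?case by (simp add: comp_def)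
qed

lemma hom_pow_cancel:
  fixes f g :: "complex \<Rightarrow> complex"
  assumes "homeomorphism UNIV UNIV f g"
  shows "(f^^n) ((g^^n) y) = y" "(g^^n) ((f^^n) y) = y"
  using hom_pow[OF assms, of n] by (auto simp: homeomorphism_def)

lemma inside_image:
  fixes h k :: "complex \<Rightarrow> complex"
  assumes "homeomorphism UNIV UNIV h k"
  shows "h ` inside K \<subseteq> inside (h ` K)"
proof
  fix w assume "w \<in> h ` inside K"
  then obtain z where z: "z \<in> inside K" "w = h z" by blast
  have hk: "\<And>x. k (h x) = x" "\<And>y. h (k y) = y" and ch: "continuous_on UNIV h"
    and ck: "continuous_on UNIV k"
    using assms by (auto simp: homeomorphism_def)
  have zK: "z \<notin> K" and bz: "bounded (connected_component_set (- K) z)"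
    using z by (auto simp: inside_def)
  have wK: "w \<notin> h ` K" using zK z hk by (metis image_iff)
  define T where "T = connected_component_set (- (h ` K)) w"
  have "k ` T \<subseteq> connected_component_set (- K) z"
  proof (rule connected_component_maximal)
    have "w \<in> T" using wK by (simp add: T_def)
    then show "z \<in> k ` T" using hk z by (metis image_eqI)
    show "connected (k ` T)" unfolding T_def
      by (rule connected_continuous_image[OF continuous_on_subset[OF ck]]) auto
    show "k ` T \<subseteq> - K" unfolding T_def using hk
      by (auto dest: connected_component_in) (metis ComplD connected_component_in image_eqI)
  qed
  then have "T \<subseteq> h ` connected_component_set (- K) z"
  proof -
    show ?thesis
  proof
    fix t assume "t \<in> T"
    then have "k t \<in> connected_component_set (- K) z" using \<open>k ` T \<subseteq> _\<close> by blast
    then show "t \<in> h ` connected_component_set (- K) z" using hk(2)[of t] by (metis image_eqI)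
  qed
  qed
  note Tsub = this
  have cc: "compact (closure (connected_component_set (- K) z))"
    using bz by simp
  have hb: "bounded (h ` closure (connected_component_set (- K) z))"
    by (intro compact_imp_bounded compact_continuous_image continuous_on_subset[OF ch])
       (use cc in auto)
  have "T \<subseteq> h ` closure (connected_component_set (- K) z)"
    using Tsub closure_subset[of "connected_component_set (- K) z"] by blast
  then have "bounded T" using hb bounded_subset by blast
  then show "w \<in> inside (h ` K)" using wK by (simp add: inside_def T_def)
qed

lemma short_trip_inv:
  fixes f g :: "complex \<Rightarrow> complex"
  assumes hom: "homeomorphism UNIV UNIV f g" and st: "short_trip f V"
  shows "short_trip g V"
  unfolding short_trip_def
proof (intro allI impI)
  fix W :: "complex set" assume W: "open W \<and> 0 \<in> W"
  then obtain N :: nat where N: "N > 0"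
    "\<And>x n. (\<forall>k\<le>n. (f ^^ k) x \<in> V) \<and> x \<notin> W \<and> (f ^^ n) x \<notin> W \<Longrightarrow> n < N"
    using st unfolding short_trip_def by blast
  show "\<exists>N>0. \<forall>x n. (\<forall>k\<le>n. (g ^^ k) x \<in> V) \<and> x \<notin> W \<and> (g ^^ n) x \<notin> W \<longrightarrow> n < N"
  proof (intro exI conjI allI impI)
    show "N > 0" by fact
    fix x n assume a: "(\<forall>k\<le>n. (g ^^ k) x \<in> V) \<and> x \<notin> W \<and> (g ^^ n) x \<notin> W"
    have "\<forall>k\<le>n. (f ^^ k) ((g^^n) x) \<in> V"
    proof (intro allI impI)
      fix k assume "k \<le> n"
      then have "(g^^n) x = (g^^k) ((g^^(n-k)) x)"
        by (metis funpow_add le_add_diff_inverse o_apply)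
      then have "(f ^^ k) ((g^^n) x) = (g^^(n-k)) x" using hom_pow_cancel[OF hom] by simp
      then show "(f ^^ k) ((g^^n) x) \<in> V" using a by simp
    qed
    moreover have "(f^^n) ((g^^n) x) = x" using hom_pow_cancel[OF hom] by simp
    ultimately show "n < N" using N(2)[of n "(g^^n) x"] a by simp
  qed
qed

lemma cont_pow:
  fixes h :: "complex \<Rightarrow> complex"
  assumes "continuous_on UNIV h"
  shows "continuous_on UNIV (h^^k)"
proof (induction k)
  case 0
  then show ?case by (simp add: continuous_on_id)
next
  case (Suc k)
  have "continuous_on UNIV (h \<circ> (h^^k))"
    by (rule continuous_on_compose[OF Suc continuous_on_subset[OF assms]]) auto
  then show ?case by simp
qed

lemma fwd_open:
  fixes h :: "complex \<Rightarrow> complex"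
  assumes ch: "continuous_on UNIV h" and h0: "h 0 = 0" and V: "open V" "0 \<in> V"
    and st: "short_trip h V" and orb: "\<forall>n. (h^^n) x \<in> V" and x0: "x \<noteq> 0"
  shows "\<exists>U. open U \<and> x \<in> U \<and> U \<subseteq> Ws h V"
proof -
  have "open (V \<inter> h -` V)" using V ch by (simp add: open_Int open_vimage)
  moreover have "0 \<in> V \<inter> h -` V" using V h0 by simp
  ultimately obtain e where e: "e > 0" "ball 0 e \<subseteq> V \<inter> h -` V"
    by (meson openE)
  define d where "d = min e (norm x / 2)"
  have d: "d > 0" using e x0 by (simp add: d_def)
  obtain N :: nat where N:
    "\<And>y n. (\<forall>k\<le>n. (h ^^ k) y \<in> V) \<and> y \<notin> ball 0 d \<and> (h ^^ n) y \<notin> ball 0 d \<Longrightarrow> n < N"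
    using st d unfolding short_trip_def by (meson centre_in_ball open_ball)
  define U where "U = ball x (norm x / 2) \<inter> (\<Inter>k\<in>{..N}. (h^^k) -` V)"
  have "open U" unfolding U_def
    by (intro open_Int open_INT ballI open_vimage cont_pow[OF ch] V) auto
  moreover have "x \<in> U" using orb x0 by (simp add: U_def)
  moreover have "U \<subseteq> Ws h V"
  proof
    fix y assume yU: "y \<in> U"
    have ynot: "y \<notin> ball 0 d"
    proof
      assume "y \<in> ball 0 d"
      then have "norm y < norm x / 2" by (simp add: d_def)
      moreover have "dist x y < norm x / 2" using yU by (simp add: U_def)
      ultimately show False by (metis dist_0_norm dist_commute dist_triangle_less_add field_sum_of_halves less_irrefl)
    qed
    have "\<forall>n. (h^^n) y \<in> V"
    proof (rule ccontr)
      assume "\<not> (\<forall>n. (h^^n) y \<in> V)"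
      then obtain n0 where "(h^^n0) y \<notin> V" by blast
      define m where "m = (LEAST n. (h^^n) y \<notin> V)"
      have m1: "(h^^m) y \<notin> V" unfolding m_def by (rule LeastI) fact
      have m2: "\<And>k. k < m \<Longrightarrow> (h^^k) y \<in> V" unfolding m_def using not_less_Least by blast
      have "m > N"
      proof (rule ccontr)
        assume "\<not> N < m"
        then show False using yU m1 by (auto simp: U_def)
      qed
      then obtain p where p: "m = Suc p" "p \<ge> N" by (metis Suc_le_eq less_imp_Suc_add le_add1 add_Suc)
      have "(h^^p) y \<notin> ball 0 d"
      proof
        assume "(h^^p) y \<in> ball 0 d"
        then have "(h^^p) y \<in> ball 0 e" by (simp add: d_def)
        then have "h ((h^^p) y) \<in> V" using e by blast
        then show False using m1 p by simp
      qed
      moreover have "\<forall>k\<le>p. (h ^^ k) y \<in> V" using m2 p by simp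
      ultimately have "p < N" using N ynot by blast
      then show False using p by simp
    qed
    then show "y \<in> Ws h V" by (simp add: Ws_def)
  qed
  ultimately show ?thesis by blast
qed


theorem lemma2:
  fixes f :: "complex \<Rightarrow> complex" and V :: "complex set"
  assumes "f \<in> H_plus"
    and "open V" and "simply_connected V" and "0 \<in> V"
    and "short_trip f V"
    and "\<not> loc_top_conj f (\<lambda>z. z / 2)"
    and "\<not> loc_top_conj f (\<lambda>z. 2 * z)"
  shows "\<forall>C \<in> components ((Ws f V \<inter> Wu f V) - {0}).
           open C \<and> simply_connected C \<and> C homeomorphic (UNIV :: complex set)"
proof -
  obtain g where hom: "homeomorphism UNIV UNIV f g" and f0: "f 0 = 0"
    using assms(1) unfolding H_plus_def by blast
  have homg: "homeomorphism UNIV UNIV g f" using hom homeomorphism_sym by blast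
  have ginv: "inv f = g" by (rule hom_inv_eq[OF hom])
  have Wu: "Wu f V = Ws g V" by (simp add: Wu_def Ws_def ginv)
  have cf: "continuous_on UNIV f" "continuous_on UNIV g" using hom by (auto simp: homeomorphism_def)
  have g0: "g 0 = 0" using homeomorphism_apply1[OF hom, of 0] f0 by simp
  have stg: "short_trip g V" by (rule short_trip_inv[OF hom assms(5)])
  define S where "S = (Ws f V \<inter> Wu f V) - {0}"
  have memWs: "\<And>h y. y \<in> Ws h V \<longleftrightarrow> (\<forall>n. (h^^n) y \<in> V)" by (simp add: Ws_def)
  have openS: "open S"
  proof (rule open_subopen[THEN iffD2], intro ballI)
    fix x assume xS: "x \<in> S"
    have xo: "\<forall>n. (f^^n) x \<in> V" "\<forall>n. (g^^n) x \<in> V" "x \<noteq> 0"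
      using xS unfolding S_def Wu by (auto simp: Ws_def)
    obtain U1 where U1: "open U1" "x \<in> U1" "U1 \<subseteq> Ws f V"
      using fwd_open[OF cf(1) f0 assms(2,4,5) xo(1,3)] by blast
    obtain U2 where U2: "open U2" "x \<in> U2" "U2 \<subseteq> Ws g V"
      using fwd_open[OF cf(2) g0 assms(2,4) stg xo(2,3)] by blast
    have "open (U1 \<inter> U2 - {0})" using U1 U2 by (intro open_Diff open_Int) auto
    moreover have "U1 \<inter> U2 - {0} \<subseteq> S" using U1 U2 by (auto simp: S_def Wu)
    ultimately show "\<exists>T. open T \<and> x \<in> T \<and> T \<subseteq> S" using U1 U2 xo by blast
  qed
  have SA: "S \<subseteq> Ws f V \<inter> Ws g V" by (auto simp: S_def Wu)
  show ?thesis unfolding S_def[symmetric]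
  proof
    fix C assume C: "C \<in> components S"
    have oC: "open C" using open_components openS C by blast
    have cC: "connected C" using C in_components_connected by blast
    have CS: "C \<subseteq> S" using C in_components_subset by blast
    have CNE: "C \<noteq> {}" using C in_components_nonempty by blast
    have "\<forall>\<gamma> z. path \<gamma> \<and> path_image \<gamma> \<subseteq> C \<and> pathfinish \<gamma> = pathstart \<gamma> \<and> z \<notin> C
              \<longrightarrow> winding_number \<gamma> z = 0"
    proof (intro allI impI, rule ccontr)
      fix \<gamma> z assume a: "path \<gamma> \<and> path_image \<gamma> \<subseteq> C \<and> pathfinish \<gamma> = pathstart \<gamma> \<and> z \<notin> C"
        and wn: "winding_number \<gamma> z \<noteq> 0"
      define K where "K = path_image \<gamma>"
      have Kc: "compact K" using a by (simp add: K_def compact_path_image)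
      then have Kcl: "closed K" by (rule compact_imp_closed)
      have KC: "K \<subseteq> C" using a by (simp add: K_def)
      have zK: "z \<notin> K" using a KC by blast
      have "z \<notin> outside K" using winding_number_zero_in_outside[of \<gamma> z] a wn unfolding K_def by blast
      then have zin: "z \<in> inside K" using zK inside_Un_outside by blast
      have KAf: "\<And>n. (f^^n) ` K \<subseteq> V" using KC CS SA by (fastforce simp: Ws_def)
      have KAg: "\<And>n. (g^^n) ` K \<subseteq> V" using KC CS SA by (fastforce simp: Ws_def)
      have insf: "(f^^n) ` inside K \<subseteq> V" for n
        using inside_image[OF hom_pow[OF hom], of n K]
          subset_simply_connected_imp_inside_subset[OF assms(3,2) KAf[of n]] by blast
      have insg: "(g^^n) ` inside K \<subseteq> V" for n
        using inside_image[OF hom_pow[OF homg], of n K]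
          subset_simply_connected_imp_inside_subset[OF assms(3,2) KAg[of n]] by blast
      have insA: "inside K \<subseteq> Ws f V \<inter> Ws g V"
        using insf insg by (fastforce simp: Ws_def)
      define Q where "Q = connected_component_set (-K) z"
      have zQ: "z \<in> Q" using zK by (simp add: Q_def)
      have QK: "Q \<subseteq> -K" unfolding Q_def by (rule connected_component_subset)
      have bQ: "bounded Q" using zin by (simp add: inside_def Q_def)
      have QI: "Q \<subseteq> inside K"
      proof
        fix w assume wQ: "w \<in> Q"
        then have "connected_component_set (-K) w = Q"
          unfolding Q_def by (metis connected_component_eq mem_Collect_eq)
        then show "w \<in> inside K" using wQ QK bQ by (auto simp: inside_def)
      qed
      have oQ: "open Q" unfolding Q_def
        by (rule open_connected_component) (use Kcl in \<open>simp add: open_Compl\<close>)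
      show False
      proof (cases "0 \<in> Q")
        case False
        have "frontier Q \<subseteq> frontier (-K)" unfolding Q_def by (rule frontier_of_connected_component_subset)
        also have "\<dots> \<subseteq> K" using Kcl by (simp add: frontier_complement frontier_subset_closed)
        finally have fQ: "frontier Q \<subseteq> K" .
        have clQ: "closure Q = Q \<union> frontier Q" by (simp add: closure_Un_frontier)
        have "Q \<subseteq> S" using QI insA False by (auto simp: S_def Wu)
        have "closure Q \<subseteq> S" using clQ fQ \<open>Q \<subseteq> S\<close> KC CS by blast
        have "Q \<noteq> UNIV" using bQ not_bounded_UNIV by blast
        then have "frontier Q \<noteq> {}" using zQ frontier_not_empty by blast
        then obtain w where wf: "w \<in> frontier Q" by blast
        then have wC: "w \<in> C" using fQ KC by blast
        obtain x where "C = connected_component_set S x" using C by (auto simp: components_iff)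
        then have Cw: "C = connected_component_set S w" using wC by (metis connected_component_eq mem_Collect_eq)
        have "closure Q \<subseteq> connected_component_set S w"
        proof (rule connected_component_maximal)
          show "w \<in> closure Q" using wf clQ by blast
          show "connected (closure Q)" unfolding Q_def by (intro connected_imp_connected_closure connected_connected_component)
        qed fact
        then have "z \<in> C" using Cw zQ closure_subset by blast
        then show False using a by blast
      next
        case True
        have "open (Q \<inter> V)" using oQ assms(2) by blast
        then obtain r where r: "r > 0" "ball 0 r \<subseteq> Q \<inter> V" using True assms(4) by (meson IntI openE)
        define e where "e = r / 2"
        have e: "e > 0" "ball 0 (2*e) \<subseteq> Q \<inter> V" using r by (auto simp: e_def)
        define W where "W = ball (0::complex) e"
        have oW: "open W" "0 \<in> W" using e by (auto simp: W_def)
        obtain N1 :: nat where N1: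
          "\<And>x n. (\<forall>k\<le>n. (f ^^ k) x \<in> V) \<and> x \<notin> W \<and> (f ^^ n) x \<notin> W \<Longrightarrow> n < N1"
          using assms(5) oW unfolding short_trip_def by blast
        obtain N2 :: nat where N2:
          "\<And>x n. (\<forall>k\<le>n. (g ^^ k) x \<in> V) \<and> x \<notin> W \<and> (g ^^ n) x \<notin> W \<Longrightarrow> n < N2"
          using stg oW unfolding short_trip_def by blast
        define N where "N = max N1 N2"
        have WQ: "W \<subseteq> Q" using e by (auto simp: W_def)
        have KW: "K \<inter> W = {}" using WQ QK by blast
        have fN: "(f^^N) ` K \<subseteq> W"
        proof
          fix u assume "u \<in> (f^^N) ` K"
          then obtain y where y: "y \<in> K" "u = (f^^N) y" by blast
          have "\<forall>k\<le>N. (f ^^ k) y \<in> V" using y KAf by blast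
          moreover have "y \<notin> W" using y KW by blast
          ultimately have "u \<in> W \<or> N < N1" using N1[of N y] y by blast
          then show "u \<in> W" by (auto simp: N_def)
        qed
        have gN: "(g^^N) ` K \<subseteq> W"
        proof
          fix u assume "u \<in> (g^^N) ` K"
          then obtain y where y: "y \<in> K" "u = (g^^N) y" by blast
          have "\<forall>k\<le>N. (g ^^ k) y \<in> V" using y KAg by blast
          moreover have "y \<notin> W" using y KW by blast
          ultimately have "u \<in> W \<or> N < N2" using N2[of N y] y by blast
          then show "u \<in> W" by (auto simp: N_def)
        qed
        have scW: "simply_connected W" by (simp add: W_def convex_imp_simply_connected)
        have fI: "(f^^N) ` inside K \<subseteq> W"
          using inside_image[OF hom_pow[OF hom], of N K]
            subset_simply_connected_imp_inside_subset[OF scW oW(1) fN] by blast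
        have gI: "(g^^N) ` inside K \<subseteq> W"
          using inside_image[OF hom_pow[OF homg], of N K]
            subset_simply_connected_imp_inside_subset[OF scW oW(1) gN] by blast
        define q where "q = complex_of_real (3*e/2)"
        have "q \<in> ball 0 (2*e)" using e by (simp add: q_def)
        then have qI: "q \<in> inside K" using e QI by blast
        have qW: "q \<notin> W" using e by (simp add: q_def W_def)
        have "(g^^N) q \<in> inside K" using qI gI WQ QI by blast
        then have "(f^^N) ((g^^N) q) \<in> W" using fI by blast
        then show False using qW hom_pow_cancel[OF hom] by simp
      qed
    qed
    then have sc: "simply_connected C"
      using simply_connected_eq_winding_number_zero[OF oC] cC by blast
    have "C homeomorphic ball (0::complex) 1"
      using simply_connected_eq_homeomorphic_to_disc[OF oC] sc CNE by blast
    then have "C homeomorphic (UNIV::complex set)"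
      by (meson homeomorphic_ball_UNIV homeomorphic_trans zero_less_one)
    then show "open C \<and> simply_connected C \<and> C homeomorphic (UNIV::complex set)"
      using oC sc by blast
  qed
qed

end
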